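(* Let $\mathcal{G}=(\mathcal{V}_A\cup\mathcal{V}_T,\mathcal{E},w)$ be a weighted bipartite graph with $|\mathcal{V}_A|\le|\mathcal{V}_T|$ that has at least one maximum matching, and let $e^*\in A(\mathcal{G})$ be a bottleneck edge. Let $\mathcal{G}^-$ be obtained from $\mathcal{G}$ by deleting both endpoints of $e^*$ and all edges incident to them, and $\mathcal{G}^+$ be obtained from $\mathcal{G}$ by deleting only the edge $e^*$; let $e^-\in A(\mathcal{G}^-)$ be a bottleneck edge of $\mathcal{G}^-$. For $\Delta\ge 0$ let $\Lambda_\Delta$ be the set of perturbations $\{\delta_e\}_{e\in\mathcal{E}}$ with $|\delta_e|\le\Delta$ for all $e\in\mathcal{E}$. (i) If $\mathcal{G}^+$ has a maximum matching, with bottleneck edge $e^+\in A(\mathcal{G}^+)$, and $$0\le\Delta\le\tfrac12\min\big(w_{e^*}-w_{e^-},\,w_{e^+}-w_{e^*}\big),$$ then the bottleneck assignment $e^*$ is robust to every perturbation in $\Lambda_\Delta$. (ii) If $\mathcal{G}^+$ has no maximum matching and $0\le\Delta\le\tfrac12(w_{e^*}-w_{e^-})$, then the bottleneck assignment $e^*$ is robust to every perturbation in $\Lambda_\Delta$.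
   Context: A weighted bipartite graph $\mathcal{G}=(\mathcal{V}_A\cup\mathcal{V}_T,\mathcal{E},w)$ has disjoint vertex sets $\mathcal{V}_A,\mathcal{V}_T$, edge set $\mathcal{E}\subseteq\mathcal{V}_A\times\mathcal{V}_T$ and real edge weights $w_e$. A matching is a set of pairwise non-adjacent edges. A maximum matching of such a graph is a matching covering every vertex of the agent side $\mathcal{V}_A$. For a graph $H$ with at least one maximum matching, $b(H)=\min_M\max_{e\in M}w_e$ over maximum matchings $M$ of $H$; a bottleneck edge of $H$ is an edge $e$ with $w_e=b(H)$ lying in some maximum matching $M$ with $\max_{e'\in M}w_{e'}=b(H)$; $A(H)$ is the set of bottleneck edges. Given perturbations $\{\delta_e\}_{e\in\mathcal{E}}\subset\mathbb{R}$, the perturbed graph $\bar{\mathcal{G}}$ has the same vertices and edges as $\mathcal{G}$ and weights $\bar w_e=w_e+\delta_e$. The bottleneck assignment $e^*\in A(\mathcal{G})$ is said to be robust to the perturbation $\{\delta_e\}$ if $e^*\in A(\bar{\mathcal{G}})$. *)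

theory Defs
  imports Complex_Main
begin

text \<open>A weighted bipartite graph is given by agent vertices VA :: 'a set, task vertices
VT :: 'b set (disjoint by typing), an edge set E \<subseteq> VA \<times> VT and weights w on edges.\<close>

definition bip_graph :: "'a set \<Rightarrow> 'b set \<Rightarrow> ('a \<times> 'b) set \<Rightarrow> bool" where
  "bip_graph VA VT E \<longleftrightarrow> finite VA \<and> finite VT \<and> E \<subseteq> VA \<times> VT"

definition is_matching :: "('a \<times> 'b) set \<Rightarrow> bool" where
  "is_matching M \<longleftrightarrow>
     (\<forall>e\<in>M. \<forall>e'\<in>M. e \<noteq> e' \<longrightarrow> fst e \<noteq> fst e' \<and> snd e \<noteq> snd e')"

definition max_matching :: "'a set \<Rightarrow> 'b set \<Rightarrow> ('a \<times> 'b) set \<Rightarrow> ('a \<times> 'b) set \<Rightarrow> bool" where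
  "max_matching VA VT E M \<longleftrightarrow> M \<subseteq> E \<and> is_matching M \<and> (\<forall>v\<in>VA. \<exists>e\<in>M. fst e = v)"

definition has_max_matching :: "'a set \<Rightarrow> 'b set \<Rightarrow> ('a \<times> 'b) set \<Rightarrow> bool" where
  "has_max_matching VA VT E \<longleftrightarrow> (\<exists>M. max_matching VA VT E M)"

definition bottleneck_value ::
  "'a set \<Rightarrow> 'b set \<Rightarrow> ('a \<times> 'b) set \<Rightarrow> ('a \<times> 'b \<Rightarrow> real) \<Rightarrow> real" where
  "bottleneck_value VA VT E w = Min {Max (w ` M) | M. max_matching VA VT E M}"

definition bottleneck_edge ::
  "'a set \<Rightarrow> 'b set \<Rightarrow> ('a \<times> 'b) set \<Rightarrow> ('a \<times> 'b \<Rightarrow> real) \<Rightarrow> 'a \<times> 'b \<Rightarrow> bool" where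
  "bottleneck_edge VA VT E w e \<longleftrightarrow>
     w e = bottleneck_value VA VT E w \<and>
     (\<exists>M. max_matching VA VT E M \<and> e \<in> M \<and> Max (w ` M) = bottleneck_value VA VT E w)"

definition minus_VA :: "'a set \<Rightarrow> 'a \<times> 'b \<Rightarrow> 'a set" where
  "minus_VA VA e = VA - {fst e}"
definition minus_VT :: "'b set \<Rightarrow> 'a \<times> 'b \<Rightarrow> 'b set" where
  "minus_VT VT e = VT - {snd e}"
definition minus_E :: "('a \<times> 'b) set \<Rightarrow> 'a \<times> 'b \<Rightarrow> ('a \<times> 'b) set" where
  "minus_E E e = {e' \<in> E. fst e' \<noteq> fst e \<and> snd e' \<noteq> snd e}"
definition plus_E :: "('a \<times> 'b) set \<Rightarrow> 'a \<times> 'b \<Rightarrow> ('a \<times> 'b) set" where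
  "plus_E E e = E - {e}"

end

theory Submission
  imports Defs
begin


lemma mm_fin_set:
  assumes "finite E"
  shows "finite {Max (f ` M) | M. max_matching VA VT E M}"
proof -
  have "{M. max_matching VA VT E M} \<subseteq> Pow E" by (auto simp: max_matching_def)
  hence "finite {M. max_matching VA VT E M}" using assms finite_subset by blast
  hence "finite ((\<lambda>M. Max (f ` M)) ` {M. max_matching VA VT E M})" by blast
  moreover have "{Max (f ` M) | M. max_matching VA VT E M} = (\<lambda>M. Max (f ` M)) ` {M. max_matching VA VT E M}" by blast
  ultimately show ?thesis by simp
qed

lemma core:
  assumes "finite E" "max_matching VA VT E M0" "e \<in> M0" "Max (f ` M0) = f e"
    "\<And>M. max_matching VA VT E M \<Longrightarrow> f e \<le> Max (f ` M)"
  shows "bottleneck_edge VA VT E f e"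
proof -
  have bv: "bottleneck_value VA VT E f = f e" unfolding bottleneck_value_def
  proof (rule Min_eqI)
    show "finite {Max (f ` M) | M. max_matching VA VT E M}" by (rule mm_fin_set[OF assms(1)])
    have "f e = Max (f ` M0) \<and> max_matching VA VT E M0" using assms(2,4) by simp
    thus "f e \<in> {Max (f ` M) | M. max_matching VA VT E M}" by blast
  next
    fix y assume "y \<in> {Max (f ` M) | M. max_matching VA VT E M}"
    then obtain M where "y = Max (f ` M)" "max_matching VA VT E M" by blast
    thus "f e \<le> y" using assms(5) by simp
  qed
  have "max_matching VA VT E M0 \<and> e \<in> M0 \<and> Max (f ` M0) = bottleneck_value VA VT E f"
    using assms(2,3,4) bv by simp
  hence "\<exists>M. max_matching VA VT E M \<and> e \<in> M \<and> Max (f ` M) = bottleneck_value VA VT E f" by blast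
  thus ?thesis unfolding bottleneck_edge_def using bv by simp
qed

theorem theorem1:
  fixes VA :: "'a set" and VT :: "'b set" and E :: "('a \<times> 'b) set"
    and w :: "'a \<times> 'b \<Rightarrow> real" and e_star e_minus :: "'a \<times> 'b" and \<Delta> :: real
  assumes graph: "bip_graph VA VT E"
    and card_le: "card VA \<le> card VT"
    and has_mm: "has_max_matching VA VT E"
    and estar: "bottleneck_edge VA VT E w e_star"
    and eminus: "bottleneck_edge (minus_VA VA e_star) (minus_VT VT e_star) (minus_E E e_star) w e_minus"
  shows
    "(\<forall>e_plus. has_max_matching VA VT (plus_E E e_star) \<and>
        bottleneck_edge VA VT (plus_E E e_star) w e_plus \<and>
        0 \<le> \<Delta> \<and> \<Delta> \<le> min (w e_star - w e_minus) (w e_plus - w e_star) / 2 \<longrightarrow>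
        (\<forall>\<delta> :: 'a \<times> 'b \<Rightarrow> real. (\<forall>e\<in>E. \<bar>\<delta> e\<bar> \<le> \<Delta>) \<longrightarrow>
           bottleneck_edge VA VT E (\<lambda>e. w e + \<delta> e) e_star))
     \<and>
     (\<not> has_max_matching VA VT (plus_E E e_star) \<and>
        0 \<le> \<Delta> \<and> \<Delta> \<le> (w e_star - w e_minus) / 2 \<longrightarrow>
        (\<forall>\<delta> :: 'a \<times> 'b \<Rightarrow> real. (\<forall>e\<in>E. \<bar>\<delta> e\<bar> \<le> \<Delta>) \<longrightarrow>
           bottleneck_edge VA VT E (\<lambda>e. w e + \<delta> e) e_star))"
  
proof -
  have finE: "finite E" using graph unfolding bip_graph_def by (meson finite_SigmaI finite_subset)
  obtain M1 where M1: "max_matching VA VT E M1" "e_star \<in> M1"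
    using estar unfolding bottleneck_edge_def by blast
  have estarE: "e_star \<in> E" using M1 unfolding max_matching_def by blast
  obtain N where N: "max_matching (minus_VA VA e_star) (minus_VT VT e_star) (minus_E E e_star) N"
      "e_minus \<in> N" "Max (w ` N) = w e_minus"
    using eminus unfolding bottleneck_edge_def by metis
  have NE: "N \<subseteq> minus_E E e_star" using N(1) unfolding max_matching_def by blast
  have "N \<subseteq> E" using NE unfolding minus_E_def by blast
  hence finN: "finite N" using finE by (rule finite_subset)
  have M0: "max_matching VA VT E (insert e_star N)"
    using N(1) estarE unfolding max_matching_def is_matching_def minus_E_def minus_VA_def by auto
  have wN: "\<And>e. e \<in> N \<Longrightarrow> w e \<le> w e_minus"
  proof -
    fix e assume "e \<in> N"
    hence "w e \<le> Max (w ` N)" using finN by simp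
    thus "w e \<le> w e_minus" using N(3) by simp
  qed
  have mmfin: "\<And>M. max_matching VA VT E M \<Longrightarrow> finite M"
    using finE unfolding max_matching_def by (meson finite_subset)
  have mmne: "\<And>M. max_matching VA VT E M \<Longrightarrow> M \<noteq> {}"
  proof -
    fix M assume "max_matching VA VT E M"
    moreover have "fst e_star \<in> VA" using estarE graph unfolding bip_graph_def by auto
    ultimately show "M \<noteq> {}" unfolding max_matching_def by auto
  qed
  have key: "bottleneck_edge VA VT E (\<lambda>e. w e + \<delta> e) e_star"
    if D: "\<forall>e\<in>E. \<bar>\<delta> e\<bar> \<le> \<Delta>" "\<Delta> \<le> (w e_star - w e_minus) / 2"
      and others: "\<And>M. max_matching VA VT E M \<Longrightarrow> e_star \<notin> M \<Longrightarrow> w e_star + \<delta> e_star \<le> Max ((\<lambda>e. w e + \<delta> e) ` M)"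
    for \<delta>
  proof (rule core[OF finE M0])
    show "e_star \<in> insert e_star N" by simp
    show "Max ((\<lambda>e. w e + \<delta> e) ` insert e_star N) = w e_star + \<delta> e_star"
    proof (rule Max_eqI)
      show "finite ((\<lambda>e. w e + \<delta> e) ` insert e_star N)" using finN by simp
      show "w e_star + \<delta> e_star \<in> (\<lambda>e. w e + \<delta> e) ` insert e_star N" by simp
      fix y assume "y \<in> (\<lambda>e. w e + \<delta> e) ` insert e_star N"
      then obtain e where e: "e \<in> insert e_star N" "y = w e + \<delta> e" by blast
      show "y \<le> w e_star + \<delta> e_star"
      proof (cases "e = e_star")
        case False
        hence "e \<in> N" "e \<in> E" using e NE unfolding minus_E_def by auto
        have "\<bar>\<delta> e\<bar> \<le> \<Delta>" "\<bar>\<delta> e_star\<bar> \<le> \<Delta>" using D estarE \<open>e \<in> E\<close> by auto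
        thus ?thesis using wN[OF \<open>e \<in> N\<close>] D(2) e(2) by (auto simp: abs_le_iff)
      qed (use e in simp)
    qed
    fix M assume M: "max_matching VA VT E M"
    show "w e_star + \<delta> e_star \<le> Max ((\<lambda>e. w e + \<delta> e) ` M)"
    proof (cases "e_star \<in> M")
      case True thus ?thesis using mmfin[OF M] by simp
    qed (use others M in auto)
  qed
  show ?thesis
  proof (intro conjI allI impI)
    fix e_plus \<delta>
    assume A: "has_max_matching VA VT (plus_E E e_star) \<and>
        bottleneck_edge VA VT (plus_E E e_star) w e_plus \<and>
        0 \<le> \<Delta> \<and> \<Delta> \<le> min (w e_star - w e_minus) (w e_plus - w e_star) / 2"
      and D: "\<forall>e\<in>E. \<bar>\<delta> e\<bar> \<le> \<Delta>"
    show "bottleneck_edge VA VT E (\<lambda>e. w e + \<delta> e) e_star"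
    proof (rule key[OF D])
      show "\<Delta> \<le> (w e_star - w e_minus) / 2" using A by auto
      fix M assume M: "max_matching VA VT E M" "e_star \<notin> M"
      hence Mp: "max_matching VA VT (plus_E E e_star) M" unfolding max_matching_def plus_E_def by auto
      have finp: "finite (plus_E E e_star)" using finE unfolding plus_E_def by simp
      have "w e_plus = bottleneck_value VA VT (plus_E E e_star) w" using A unfolding bottleneck_edge_def by blast
      also have "\<dots> \<le> Max (w ` M)" unfolding bottleneck_value_def
        by (rule Min_le) (use mm_fin_set[OF finp] Mp in auto)
      finally have wp: "w e_plus \<le> Max (w ` M)" .
      obtain e where e: "e \<in> M" "w e = Max (w ` M)"
      proof -
        have "Max (w ` M) \<in> w ` M" using mmfin[OF M(1)] mmne[OF M(1)] by (intro Max_in) auto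
        thus ?thesis using that by (metis imageE)
      qed
      have eE: "e \<in> E" using e M unfolding max_matching_def by auto
      have "w e_star + \<delta> e_star \<le> w e + \<delta> e"
        using wp e(2) D[rule_format, OF eE] D[rule_format, OF estarE] A unfolding abs_le_iff min_def by (auto split: if_splits)
      also have "\<dots> \<le> Max ((\<lambda>e. w e + \<delta> e) ` M)" using e(1) mmfin[OF M(1)] by simp
      finally show "w e_star + \<delta> e_star \<le> Max ((\<lambda>e. w e + \<delta> e) ` M)" .
    qed
  next
    fix \<delta>
    assume A: "\<not> has_max_matching VA VT (plus_E E e_star) \<and>
        0 \<le> \<Delta> \<and> \<Delta> \<le> (w e_star - w e_minus) / 2"
      and D: "\<forall>e\<in>E. \<bar>\<delta> e\<bar> \<le> \<Delta>"
    show "bottleneck_edge VA VT E (\<lambda>e. w e + \<delta> e) e_star"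
    proof (rule key[OF D])
      show "\<Delta> \<le> (w e_star - w e_minus) / 2" using A by auto
      fix M assume M: "max_matching VA VT E M" "e_star \<notin> M"
      hence "max_matching VA VT (plus_E E e_star) M" unfolding max_matching_def plus_E_def by auto
      thus "w e_star + \<delta> e_star \<le> Max ((\<lambda>e. w e + \<delta> e) ` M)" using A unfolding has_max_matching_def by blast
    qed
  qed
qed

end
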